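(* Let $\tau$ be a graph on a closed oriented surface which lifts to a triangulation of the universal cover, let $E$ be its set of edges, let $\mathbf{c}:E\to\mathbb{R}$, and let $v$ be a vertex of $\tau$ of valence $m$. With $x_i$, $A_i$, $W_j=\begin{pmatrix}a_j&b_j\\c_j&d_j\end{pmatrix}$ as in the context, the following are equivalent: (A) $W_m=-I$, and $a_j<0$, $c_j<0$, $b_j>0$, $d_j>0$ for $1\le j\le m-1$ except that $a_1=0$ and $d_{m-1}=0$; (B) $W_m=-I$, and $a_j\le 0$, $c_j\le 0$, $b_j\ge 0$, $d_j\ge 0$ for $1\le j\le m-1$ except that $a_1=0$ and $d_{m-1}=0$.
   Context: List the edge-ends incident to $v$ in clockwise order (with respect to the orientation of the surface) as $e_1,\dots,e_m$, an edge with both endpoints at $v$ contributing two entries. Set $x_i=\mathbf{c}(e_i)$, $A_i=\begin{pmatrix}0&1\\-1&x_i\end{pmatrix}$, $W_j=A_1A_2\cdots A_j=\begin{pmatrix}a_j&b_j\\c_j&d_j\end{pmatrix}$ for $j=1,\dots,m$, and $I$ is the $2\times2$ identity matrix. In both (A) and (B), the phrase "except that $a_1=0$ and $d_{m-1}=0$" means the sign conditions are not imposed on $a_1$ and $d_{m-1}$, which equal $0$. *)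

theory Defs
  imports "HOL-Analysis.Analysis"
begin

definition Amat :: "real \<Rightarrow> real^2^2" where
  "Amat t = vector [vector [0, 1], vector [-1, t]]"

text \<open>W j = A_1 A_2 ... A_j for the sequence x (indices start at 1); W 0 = I.\<close>
fun Wmat :: "(nat \<Rightarrow> real) \<Rightarrow> nat \<Rightarrow> real^2^2" where
  "Wmat x 0 = mat 1"
| "Wmat x (Suc j) = Wmat x j ** Amat (x (Suc j))"

definition ent_a :: "real^2^2 \<Rightarrow> real" where "ent_a W = W $ 1 $ 1"
definition ent_b :: "real^2^2 \<Rightarrow> real" where "ent_b W = W $ 1 $ 2"
definition ent_c :: "real^2^2 \<Rightarrow> real" where "ent_c W = W $ 2 $ 1"
definition ent_d :: "real^2^2 \<Rightarrow> real" where "ent_d W = W $ 2 $ 2"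

end

theory Submission
  imports Defs
begin

lemma ents:
  "ent_a (Wmat x (Suc j)) = - ent_b (Wmat x j)"
  "ent_c (Wmat x (Suc j)) = - ent_d (Wmat x j)"
  "ent_b (Wmat x (Suc j)) = ent_a (Wmat x j) + x (Suc j) * ent_b (Wmat x j)"
  "ent_d (Wmat x (Suc j)) = ent_c (Wmat x j) + x (Suc j) * ent_d (Wmat x j)"
  by (simp_all add: ent_a_def ent_b_def ent_c_def ent_d_def Amat_def matrix_matrix_mult_def sum_2 vector_def Wmat.simps)

lemma ents0: "ent_a (Wmat x 0) = 1" "ent_b (Wmat x 0) = 0" "ent_c (Wmat x 0) = 0" "ent_d (Wmat x 0) = 1"
  by (simp_all add: ent_a_def ent_b_def ent_c_def ent_d_def mat_def Wmat.simps)

declare Wmat.simps[simp del]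

lemma detW: "ent_a (Wmat x j) * ent_d (Wmat x j) - ent_b (Wmat x j) * ent_c (Wmat x j) = 1"
  by (induction j) (simp_all del: Wmat.simps add: ents ents0 algebra_simps)

lemma detS: "ent_b (Wmat x j) * ent_d (Wmat x (Suc j)) - ent_b (Wmat x (Suc j)) * ent_d (Wmat x j) = -1"
  using detW[of x "Suc j"] by (simp del: Wmat.simps add: ents(1,2))

theorem lemma3p1:
  fixes x :: "nat \<Rightarrow> real" and m :: nat
  assumes "m \<ge> 1"
  shows "(Wmat x m = - mat 1 \<and>
           (\<forall>j\<in>{1..m-1}. (j \<noteq> 1 \<longrightarrow> ent_a (Wmat x j) < 0) \<and> ent_c (Wmat x j) < 0 \<and>
                            ent_b (Wmat x j) > 0 \<and> (j \<noteq> m-1 \<longrightarrow> ent_d (Wmat x j) > 0)))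
     \<longleftrightarrow>
         (Wmat x m = - mat 1 \<and>
           (\<forall>j\<in>{1..m-1}. (j \<noteq> 1 \<longrightarrow> ent_a (Wmat x j) \<le> 0) \<and> ent_c (Wmat x j) \<le> 0 \<and>
                            ent_b (Wmat x j) \<ge> 0 \<and> (j \<noteq> m-1 \<longrightarrow> ent_d (Wmat x j) \<ge> 0)))"
    (is "?A \<longleftrightarrow> ?B")
proof
  assume A: "?A"
  show "?B"
  proof (rule conjI)
    show "Wmat x m = - mat 1" using A by blast
  next
    show "\<forall>j\<in>{1..m-1}. (j \<noteq> 1 \<longrightarrow> ent_a (Wmat x j) \<le> 0) \<and> ent_c (Wmat x j) \<le> 0 \<and>
                            ent_b (Wmat x j) \<ge> 0 \<and> (j \<noteq> m-1 \<longrightarrow> ent_d (Wmat x j) \<ge> 0)"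
    proof
    fix j assume j: "j \<in> {1..m-1}"
    then have "(j \<noteq> 1 \<longrightarrow> ent_a (Wmat x j) < 0) \<and> ent_c (Wmat x j) < 0 \<and>
                            ent_b (Wmat x j) > 0 \<and> (j \<noteq> m-1 \<longrightarrow> ent_d (Wmat x j) > 0)"
      using A by blast
    then show "(j \<noteq> 1 \<longrightarrow> ent_a (Wmat x j) \<le> 0) \<and> ent_c (Wmat x j) \<le> 0 \<and>
                            ent_b (Wmat x j) \<ge> 0 \<and> (j \<noteq> m-1 \<longrightarrow> ent_d (Wmat x j) \<ge> 0)"
      by (auto simp del: Wmat.simps)
  qed
  qed
next
  assume H: "?B"
  define B where "B j = ent_b (Wmat x j)" for j
  define D where "D j = ent_d (Wmat x j)" for j
  have WM: "Wmat x m = - mat 1" using H by blast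
  have msuc: "m = Suc (m-1)" using assms by (simp del: Wmat.simps)
  have Bm: "B (m-1) = 1"
  proof -
    have "ent_a (Wmat x m) = -1" using WM by (simp add: ent_a_def mat_def)
    then show ?thesis using ents(1)[of x "m-1"] msuc B_def by (simp del: Wmat.simps)
  qed
  have Dm: "D (m-1) = 0"
  proof -
    have "ent_c (Wmat x m) = 0" using WM by (simp add: ent_c_def mat_def)
    then show ?thesis using ents(2)[of x "m-1"] msuc D_def by (simp del: Wmat.simps)
  qed
  have det: "B j * D (Suc j) - B (Suc j) * D j = -1" for j
    using detS[of x j] B_def D_def by (simp del: Wmat.simps)
  have Bnn: "B j \<ge> 0" if "j \<le> m-1" for j
  proof (cases "j = 0")
    case True then show ?thesis by (simp add: B_def ents0)
  next
    case False
    then show ?thesis using H that B_def by (auto simp del: Wmat.simps)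
  qed
  have Dnn: "D j \<ge> 0" if "j + 2 \<le> m" for j
  proof -
    have "Suc j \<in> {1..m-1}" using that assms by (auto simp del: Wmat.simps)
    then have "ent_c (Wmat x (Suc j)) \<le> 0" using H by blast
    then show ?thesis by (simp add: ents D_def)
  qed
  have Bpos: "B j > 0" if "1 \<le> j" "j \<le> m-1" for j
  proof (rule ccontr)
    assume "\<not> B j > 0"
    with Bnn[OF that(2)] have B0: "B j = 0" by (simp del: Wmat.simps)
    with Bm have "j \<noteq> m-1" by (auto simp del: Wmat.simps)
    then have "j + 2 \<le> m" using that by (simp del: Wmat.simps)
    then have d: "D j \<ge> 0" using Dnn by blast
    have b: "B (j-1) \<ge> 0" using Bnn that by (simp del: Wmat.simps)
    have "B (j-1) * D j = -1" using det[of "j-1"] that B0 by (simp del: Wmat.simps)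
    moreover have "B (j-1) * D j \<ge> 0" using b d by (simp del: Wmat.simps)
    ultimately show False by (simp del: Wmat.simps)
  qed
  have Dpos: "D j > 0" if "j + 2 \<le> m" for j
  proof (rule ccontr)
    assume "\<not> D j > 0"
    with Dnn[OF that] have D0: "D j = 0" by (simp del: Wmat.simps)
    then have "j \<noteq> 0" by (metis D_def ents0(4) zero_neq_one)
    have b: "B j \<ge> 0" using Bnn that by (simp del: Wmat.simps)
    have e: "B j * D (Suc j) = -1" using det[of j] D0 by (simp del: Wmat.simps)
    show False
    proof (cases "Suc j = m-1")
      case True then show False using e Dm by (simp del: Wmat.simps)
    next
      case False
      then have "D (Suc j) \<ge> 0" using Dnn that by (simp del: Wmat.simps)
      then show False using e b by (metis mult_nonneg_nonneg neg_0_le_iff_le not_one_le_zero neg_le_iff_le)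
    qed
  qed
  have "\<forall>j\<in>{1..m-1}. (j \<noteq> 1 \<longrightarrow> ent_a (Wmat x j) < 0) \<and> ent_c (Wmat x j) < 0 \<and>
                            ent_b (Wmat x j) > 0 \<and> (j \<noteq> m-1 \<longrightarrow> ent_d (Wmat x j) > 0)"
  proof
    fix j assume j: "j \<in> {1..m-1}"
    then obtain k where k: "j = Suc k" by (cases j) auto
    have 1: "j \<noteq> 1 \<longrightarrow> ent_a (Wmat x j) < 0"
      using Bpos[of k] j k by (auto simp: ents B_def)
    have 2: "ent_c (Wmat x j) < 0" using Dpos[of k] j k by (auto simp: ents D_def)
    have 3: "ent_b (Wmat x j) > 0" using Bpos[of j] j by (auto simp: B_def)
    have 4: "j \<noteq> m-1 \<longrightarrow> ent_d (Wmat x j) > 0" using Dpos[of j] j by (auto simp: D_def)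
    show "(j \<noteq> 1 \<longrightarrow> ent_a (Wmat x j) < 0) \<and> ent_c (Wmat x j) < 0 \<and>
                            ent_b (Wmat x j) > 0 \<and> (j \<noteq> m-1 \<longrightarrow> ent_d (Wmat x j) > 0)"
      using 1 2 3 4 by blast
  qed
  then show "?A" using WM by blast
qed

end
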